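(* Let \[ P(z,\bar z)=\sum_{k=0}^n\sum_{j=0}^k\alpha_{j,k-j}z^j\bar z^{\,k-j} \] be a polyanalytic polynomial of degree $n$ such that there exists $\ell\in\{0,1,\ldots,n\}$ with \[ \alpha_n := |\alpha_{\ell,n-\ell}|-\sum_{j=0,\,j\neq\ell}^n|\alpha_{j,n-j}|>0. \] Define the real polynomial \[ q(t)=t^n-\sum_{k=0}^{n-1}c_kt^k,\qquad c_k=\sum_{j=0}^k\frac{|\alpha_{j,k-j}|}{\alpha_n},\quad k=0,1,\ldots,n-1. \] If not all $c_k$ are zero, then $q$ has a unique positive zero $r_0>0$; otherwise set $r_0=0$. Then: (i) every zero $z$ of $P$ satisfies $|z|\leq r_0$; (ii) $r_0\leq r_1:=\max\Bigl\{1,\sum_{k=0}^{n-1}\sum_{j=0}^k\frac{|\alpha_{j,k-j}|}{\alpha_n}\Bigr\}$ and $r_0\leq r_2:=1+\max\Bigl\{\sum_{j=0}^k\frac{|\alpha_{j,k-j}|}{\alpha_n}:k=0,1,\ldots,n-1\Bigr\}$.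
   Context: A polyanalytic polynomial is a function $\mathbb{C}\to\mathbb{C}$ of the form given, with complex coefficients $\alpha_{j,k-j}$; its degree is the largest $k$ such that some $\alpha_{j,k-j}\neq 0$. A zero of $P$ is a point $z\in\mathbb{C}$ with $P(z,\bar z)=0$. *)

theory Defs
  imports Complex_Main
begin

definition polyan :: "(nat \<Rightarrow> nat \<Rightarrow> complex) \<Rightarrow> nat \<Rightarrow> complex \<Rightarrow> complex" where
  "polyan \<alpha> n z = (\<Sum>k\<le>n. \<Sum>j\<le>k. \<alpha> j (k - j) * z ^ j * cnj z ^ (k - j))"

end

theory Submission
  imports Defs
begin



lemma q_factor:
  fixes c :: "nat \<Rightarrow> real" and t :: real
  assumes "t > 0"
  shows "t ^ n - (\<Sum>k<n. c k * t ^ k) = t ^ n * (1 - (\<Sum>k<n. c k / t ^ (n - k)))"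
proof -
  have "c k * t ^ k = t ^ n * (c k / t ^ (n - k))" if "k < n" for k
  proof -
    have "t ^ n = t ^ (n - k) * t ^ k" using that by (simp add: power_add[symmetric])
    then show ?thesis using assms by (simp add: field_simps)
  qed
  then have "(\<Sum>k<n. c k * t ^ k) = t ^ n * (\<Sum>k<n. c k / t ^ (n - k))"
    by (simp add: sum_distrib_left)
  then show ?thesis by (simp add: algebra_simps)
qed

lemma g_strict:
  fixes c :: "nat \<Rightarrow> real"
  assumes nn: "\<And>k. c k \<ge> 0" and m: "m < n" "c m \<noteq> 0" and ts: "0 < t" "t < s"
  shows "(\<Sum>k<n. c k / s ^ (n - k)) < (\<Sum>k<n. c k / t ^ (n - k))"
proof (rule sum_strict_mono_ex1)
  show "\<forall>k\<in>{..<n}. c k / s ^ (n - k) \<le> c k / t ^ (n - k)"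
    using ts nn by (auto intro!: divide_left_mono power_mono mult_pos_pos)
  have "t ^ (n - m) < s ^ (n - m)" using ts m by (intro power_strict_mono) auto
  moreover have "c m > 0" using nn[of m] m by simp
  ultimately have "c m / s ^ (n - m) < c m / t ^ (n - m)"
    using ts by (intro divide_strict_left_mono) auto
  then show "\<exists>k\<in>{..<n}. c k / s ^ (n - k) < c k / t ^ (n - k)" using m by auto
qed simp

lemma g_upper:
  fixes c :: "nat \<Rightarrow> real"
  assumes nn: "\<And>k. c k \<ge> 0" and t: "t \<ge> 1"
  shows "(\<Sum>k<n. c k / t ^ (n - k)) \<le> (\<Sum>k<n. c k) / t"
proof -
  have "(\<Sum>k<n. c k / t ^ (n - k)) \<le> (\<Sum>k<n. c k / t)"
  proof (rule sum_mono)
    fix k assume "k \<in> {..<n}"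
    then have "t ^ 1 \<le> t ^ (n - k)" using t by (intro power_increasing) auto
    then show "c k / t ^ (n - k) \<le> c k / t" using t nn[of k]
      by (intro divide_left_mono) auto
  qed
  then show ?thesis by (simp add: sum_divide_distrib)
qed

lemma realpart:
  fixes c :: "nat \<Rightarrow> real" and M :: real
  assumes nn: "\<And>k. c k \<ge> 0" and m: "m < n" "c m \<noteq> 0"
    and M: "\<And>k. k < n \<Longrightarrow> c k \<le> M"
  defines "q \<equiv> (\<lambda>t. t ^ n - (\<Sum>k<n. c k * t ^ k))"
  shows "\<exists>!r. r > 0 \<and> q r = 0"
    and "\<And>r t. r > 0 \<Longrightarrow> q r = 0 \<Longrightarrow> t \<ge> 0 \<Longrightarrow> t ^ n \<le> (\<Sum>k<n. c k * t ^ k) \<Longrightarrow> t \<le> r"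
    and "\<And>r. r > 0 \<Longrightarrow> q r = 0 \<Longrightarrow> r \<le> max 1 (\<Sum>k<n. c k)"
    and "\<And>r. r > 0 \<Longrightarrow> q r = 0 \<Longrightarrow> r \<le> 1 + M"
proof -
  define g where "g = (\<lambda>t. \<Sum>k<n. c k / t ^ (n - k))"
  have qg: "q t = 0 \<longleftrightarrow> g t = 1" if "t > 0" for t
    using q_factor[OF that, of n c] that unfolding q_def g_def by auto
  have gs: "g s < g t" if "0 < t" "t < s" for s t
    unfolding g_def using g_strict[of c m n t s] nn m that by blast
  have cm: "c m > 0" using nn[of m] m by simp
  define a where "a = min 1 (c m)"
  define S where "S = (\<Sum>k<n. c k)"
  have S0: "S \<ge> 0" unfolding S_def using nn by (simp add: sum_nonneg)
  define b where "b = S + 1"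
  have a0: "a > 0" "a \<le> 1" using cm unfolding a_def by auto
  have ab: "a \<le> b" using a0 S0 unfolding b_def by simp
  have ga: "g a \<ge> 1"
  proof -
    have "c m / a ^ (n - m) \<le> g a" unfolding g_def
      using nn a0 m by (intro member_le_sum[where f="\<lambda>k. c k / a ^ (n - k)"]) auto
    moreover have "a ^ (n - m) \<le> a ^ 1" using a0 m by (intro power_decreasing) auto
    then have "a ^ (n - m) \<le> c m" unfolding a_def by simp
    then have "1 \<le> c m / a ^ (n - m)" using a0 by simp
    ultimately show ?thesis by simp
  qed
  have gb: "g b \<le> 1"
  proof -
    have "g b \<le> S / b" using g_upper[of c b n] nn S0 unfolding g_def S_def b_def by simp
    also have "\<dots> \<le> 1" unfolding b_def using S0 by simp
    finally show ?thesis .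
  qed
  have "continuous_on {a..b} g" unfolding g_def using a0
    by (intro continuous_intros) auto
  then obtain r where r: "a \<le> r" "r \<le> b" "g r = 1" using IVT2'[of g b 1 a] ga gb ab by auto
  have ex: "r > 0 \<and> q r = 0" using r a0 qg by auto
  have uniq: "r' = r''" if "r' > 0" "q r' = 0" "r'' > 0" "q r'' = 0" for r' r''
    using that qg gs[of r' r''] gs[of r'' r'] by (cases r' r'' rule: linorder_cases) auto
  show "\<exists>!r. r > 0 \<and> q r = 0" using ex uniq by blast
  show "t \<le> r" if "r > 0" "q r = 0" "t \<ge> 0" "t ^ n \<le> (\<Sum>k<n. c k * t ^ k)" for r t
  proof (rule ccontr)
    assume "\<not> t \<le> r"
    then have tr: "t > r" by simp
    then have t0: "t > 0" using that by simp
    have "q t \<le> 0" using that unfolding q_def by simp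
    then have "t ^ n * (1 - g t) \<le> 0" using q_factor[OF t0, of n c] unfolding q_def g_def by simp
    then have "1 - g t \<le> 0" using t0 zero_less_power[OF t0, of n] by (auto simp add: mult_le_0_iff)
    moreover have "g t < g r" using gs[OF that(1) tr] .
    ultimately show False using qg that by auto
  qed
  show "r \<le> max 1 (\<Sum>k<n. c k)" if "r > 0" "q r = 0" for r
  proof (cases "r \<le> 1")
    case False
    then have "1 \<le> S / r" using g_upper[of c r n] nn qg[of r] that unfolding g_def S_def by simp
    then have "r \<le> S" using False by (simp add: field_simps)
    then show ?thesis unfolding S_def by simp
  qed simp
  show "r \<le> 1 + M" if "r > 0" "q r = 0" for r
  proof (cases "r \<le> 1")
    case True
    have "M \<ge> 0" using M[of m] m cm by simp
    then show ?thesis using True by simp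
  next
    case False
    have M0: "M \<ge> 0" using M[of m] m cm by simp
    have "r ^ n = (\<Sum>k<n. c k * r ^ k)" using that unfolding q_def by simp
    also have "\<dots> \<le> (\<Sum>k<n. M * r ^ k)" using M False by (intro sum_mono mult_right_mono) auto
    also have "\<dots> = M * (\<Sum>k<n. r ^ k)" by (simp add: sum_distrib_left)
    finally have h: "r ^ n \<le> M * (\<Sum>k<n. r ^ k)" .
    have "(r - 1) * r ^ n \<le> (r - 1) * (M * (\<Sum>k<n. r ^ k))"
      using h False by (intro mult_left_mono) auto
    also have "\<dots> = M * (r ^ n - 1)" by (simp add: power_diff_1_eq)
    also have "\<dots> \<le> M * r ^ n" using M0 by (simp add: mult_left_mono)
    finally have "(r - 1) * r ^ n \<le> M * r ^ n" .
    then have "r - 1 \<le> M" using False by (simp add: mult_le_cancel_right)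
    then show ?thesis by simp
  qed
qed

lemma polybound:
  fixes \<alpha> :: "nat \<Rightarrow> nat \<Rightarrow> complex" and n l :: nat and z :: complex and an :: real
  assumes hl: "l \<le> n"
    and an: "an = cmod (\<alpha> l (n - l)) - (\<Sum>j\<in>{0..n} - {l}. cmod (\<alpha> j (n - j)))"
    and an_pos: "an > 0"
    and P0: "polyan \<alpha> n z = 0"
  shows "cmod z ^ n \<le> (\<Sum>k<n. (\<Sum>j\<le>k. cmod (\<alpha> j (k - j)) / an) * cmod z ^ k)"
proof -
  define f where "f = (\<lambda>k j. \<alpha> j (k - j) * z ^ j * cnj z ^ (k - j))"
  define T where "T = (\<Sum>j\<le>n. f n j)"
  define L where "L = (\<Sum>k<n. \<Sum>j\<le>k. f k j)"
  have nf: "norm (f k j) = cmod (\<alpha> j (k - j)) * cmod z ^ k" if "j \<le> k" for k j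
  proof -
    have "norm (f k j) = cmod (\<alpha> j (k - j)) * cmod z ^ j * cmod z ^ (k - j)"
      unfolding f_def by (simp add: norm_mult norm_power)
    also have "\<dots> = cmod (\<alpha> j (k - j)) * cmod z ^ k"
      using that by (simp add: mult.assoc power_add[symmetric])
    finally show ?thesis .
  qed
  have "polyan \<alpha> n z = L + T"
    unfolding polyan_def L_def T_def f_def by (simp add: lessThan_Suc_atMost[symmetric])
  then have TL: "norm T = norm L" using P0 by (simp add: add_eq_0_iff)
  have fin: "finite ({..n} - {l})" by simp
  have Tsplit: "T = f n l + (\<Sum>j\<in>{..n} - {l}. f n j)"
    unfolding T_def using hl by (simp add: sum.remove)
  have "norm (\<Sum>j\<in>{..n} - {l}. f n j) \<le> (\<Sum>j\<in>{..n} - {l}. norm (f n j))"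
    by (rule norm_sum)
  also have "\<dots> = (\<Sum>j\<in>{..n} - {l}. cmod (\<alpha> j (n - j))) * cmod z ^ n"
    by (simp add: nf sum_distrib_right)
  finally have r1: "norm (\<Sum>j\<in>{..n} - {l}. f n j) \<le> (\<Sum>j\<in>{..n} - {l}. cmod (\<alpha> j (n - j))) * cmod z ^ n" .
  have "norm (f n l) \<le> norm T + norm (\<Sum>j\<in>{..n} - {l}. f n j)"
    unfolding Tsplit by (metis add_diff_cancel_right' norm_triangle_ineq4)
  then have lowT: "an * cmod z ^ n \<le> norm T"
    using r1 nf[OF hl] unfolding an by (simp add: atLeast0AtMost algebra_simps)
  have "norm L \<le> (\<Sum>k<n. norm (\<Sum>j\<le>k. f k j))" unfolding L_def by (rule norm_sum)
  also have "\<dots> \<le> (\<Sum>k<n. \<Sum>j\<le>k. norm (f k j))" by (intro sum_mono norm_sum)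
  also have "\<dots> = (\<Sum>k<n. (\<Sum>j\<le>k. cmod (\<alpha> j (k - j))) * cmod z ^ k)"
    by (intro sum.cong refl) (simp add: nf sum_distrib_right)
  also have "\<dots> = an * (\<Sum>k<n. (\<Sum>j\<le>k. cmod (\<alpha> j (k - j)) / an) * cmod z ^ k)"
    unfolding sum_distrib_left
    by (intro sum.cong refl) (use an_pos in \<open>simp add: sum_divide_distrib[symmetric]\<close>)
  finally have "an * cmod z ^ n \<le> an * (\<Sum>k<n. (\<Sum>j\<le>k. cmod (\<alpha> j (k - j)) / an) * cmod z ^ k)"
    using lowT TL by simp
  then show ?thesis using an_pos by simp
qed

theorem theorem3p1:
  fixes \<alpha> :: "nat \<Rightarrow> nat \<Rightarrow> complex" and n l :: nat
    and an :: real and c :: "nat \<Rightarrow> real" and q :: "real \<Rightarrow> real"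
    and r0 r1 r2 :: real
  assumes deg: "\<exists>j\<le>n. \<alpha> j (n - j) \<noteq> 0"
    and hl: "l \<le> n"
  defines "an \<equiv> cmod (\<alpha> l (n - l)) - (\<Sum>j\<in>{0..n} - {l}. cmod (\<alpha> j (n - j)))"
  assumes an_pos: "an > 0"
  defines "c \<equiv> (\<lambda>k. \<Sum>j\<le>k. cmod (\<alpha> j (k - j)) / an)"
    and "q \<equiv> (\<lambda>t. t ^ n - (\<Sum>k<n. c k * t ^ k))"
    and "r0 \<equiv> (if (\<forall>k<n. c k = 0) then 0 else (THE r. r > 0 \<and> q r = 0))"
    and "r1 \<equiv> max 1 (\<Sum>k<n. \<Sum>j\<le>k. cmod (\<alpha> j (k - j)) / an)"
    and "r2 \<equiv> 1 + Max (insert 0 {(\<Sum>j\<le>k. cmod (\<alpha> j (k - j)) / an) | k. k < n})"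
  shows "(\<not> (\<forall>k<n. c k = 0) \<longrightarrow> (\<exists>!r. r > 0 \<and> q r = 0))
    \<and> (\<forall>z. polyan \<alpha> n z = 0 \<longrightarrow> cmod z \<le> r0)
    \<and> r0 \<le> r1 \<and> r0 \<le> r2"
proof -
  have cnn: "\<And>k. c k \<ge> 0" unfolding c_def using an_pos by (simp add: sum_nonneg)
  define M where "M = Max (insert 0 {(\<Sum>j\<le>k. cmod (\<alpha> j (k - j)) / an) | k. k < n})"
  have finM: "finite (insert 0 {(\<Sum>j\<le>k. cmod (\<alpha> j (k - j)) / an) | k. k < n})" by simp
  have M0: "M \<ge> 0" unfolding M_def using finM by simp
  have Mge: "c k \<le> M" if "k < n" for k
    unfolding M_def c_def using finM that by (intro Max_ge) auto
  have r2M: "r2 = 1 + M" unfolding r2_def M_def by simp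
  have r1S: "r1 = max 1 (\<Sum>k<n. c k)" unfolding r1_def c_def by simp
  have zb: "cmod z ^ n \<le> (\<Sum>k<n. c k * cmod z ^ k)" if "polyan \<alpha> n z = 0" for z
    using polybound[OF hl an_def[THEN meta_eq_to_obj_eq] an_pos that] unfolding c_def .
  show ?thesis
  proof (cases "\<forall>k<n. c k = 0")
    case True
    have "cmod z \<le> r0" if "polyan \<alpha> n z = 0" for z
    proof -
      have "cmod z ^ n \<le> 0" using zb[OF that] True by simp
      then have "cmod z = 0"
        by (metis norm_ge_zero power_0 zero_le_power zero_less_one not_le order.antisym power_eq_0_iff)
      then show ?thesis using True unfolding r0_def by simp
    qed
    moreover have "r0 = 0" using True unfolding r0_def by simp
    ultimately show ?thesis using M0 r1S r2M True by auto
  next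
    case False
    then obtain m where m: "m < n" "c m \<noteq> 0" by auto
    note R = realpart[of c m n M, OF cnn m Mge, folded q_def]
    have ex1: "\<exists>!r. r > 0 \<and> q r = 0" unfolding q_def
      by (rule realpart(1)[of c m n M]) (use cnn m Mge in auto)
    have r0e: "r0 = (THE r. r > 0 \<and> q r = 0)" unfolding r0_def using False by (subst if_not_P) auto
    have r0p: "r0 > 0 \<and> q r0 = 0" unfolding r0e by (rule theI'[OF ex1])
    have "cmod z \<le> r0" if "polyan \<alpha> n z = 0" for z
      using R(2)[of r0 "cmod z"] r0p zb[OF that] by (simp add: q_def)
    moreover have "r0 \<le> r1" using R(3)[of r0] r0p r1S by (simp add: q_def)
    moreover have "r0 \<le> r2" using R(4)[of r0] r0p r2M by (simp add: q_def)
    ultimately show ?thesis using ex1 by blast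
  qed
qed

end
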